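(* Let $\Phi_0$ be a strictly plurisubharmonic quadratic form on $\mathbf{C}^n$ and let $F$ be a holomorphic quadratic form on $\mathbf{C}^{2n}$ whose fundamental matrix $\mathcal{F}$ does not have the eigenvalues $\pm2$, and such that $\mathrm{Im}\, F|_{\Lambda_{\Phi_0}} \geq 0$. Let $\kappa_F$ be the complex linear canonical transformation $\kappa_F:(1+\frac12\mathcal{F})\rho\mapsto(1-\frac12\mathcal{F})\rho$, $\rho\in\mathbf{C}^{2n}$, and let $\Phi$ be the strictly plurisubharmonic quadratic form with $\kappa_F(\Lambda_{\Phi_0})=\Lambda_\Phi$. Then $$\Lambda_{\Phi} \cap \Lambda_{\Phi_0} = \left\{\left(1-\tfrac{1}{2} \mathcal{F}\right)\rho:\ \rho \in \Lambda_{\Phi_0},\ \mathrm{Im}\, F(\rho) = 0\right\}.$$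
   Context: The fundamental matrix of $F$ is $\mathcal{F}= \begin{pmatrix}F''_{\xi x} &F''_{\xi \xi }\\ -F''_{xx} &-F''_{x\xi }\end{pmatrix}$. For a real quadratic form $\Phi$ on $\mathbf{C}^n$, $\Lambda_{\Phi} = \{(x,\frac{2}{i}\frac{\partial \Phi}{\partial x}(x)) : x\in \mathbf{C}^n\}$. Under the stated hypotheses it is known that $\kappa_F(\Lambda_{\Phi_0})$ is of the form $\Lambda_\Phi$ for a strictly plurisubharmonic quadratic form $\Phi\le\Phi_0$. *)

theory Defs
  imports "HOL-Analysis.Analysis"
begin

definition bil :: "complex^'n \<Rightarrow> complex^'n \<Rightarrow> complex" where
  "bil x y = (\<Sum>i\<in>UNIV. x$i * y$i)"

text \<open>Holomorphic quadratic form on C^{2n} with Hessian blocks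
  F''_xx = Fxx, F''_x xi = Fxxi, F''_xi xi = Fxixi (so F''_xi x = transpose Fxxi):
  F(x,xi) = (1/2) (x.Fxx x + 2 x.Fxxi xi + xi.Fxixi xi).\<close>
definition hol_quad ::
  "complex^'n^'n \<Rightarrow> complex^'n^'n \<Rightarrow> complex^'n^'n \<Rightarrow> (complex^'n) \<times> (complex^'n) \<Rightarrow> complex" where
  "hol_quad Fxx Fxxi Fxixi \<rho> =
     (bil (fst \<rho>) (Fxx *v fst \<rho>) + 2 * bil (fst \<rho>) (Fxxi *v snd \<rho>)
      + bil (snd \<rho>) (Fxixi *v snd \<rho>)) / 2"

text \<open>Action of the fundamental matrix
  [[F''_xi x, F''_xi xi], [-F''_xx, -F''_x xi]] on (x, xi).\<close>
definition fundamental_map ::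
  "complex^'n^'n \<Rightarrow> complex^'n^'n \<Rightarrow> complex^'n^'n \<Rightarrow> (complex^'n) \<times> (complex^'n) \<Rightarrow> (complex^'n) \<times> (complex^'n)" where
  "fundamental_map Fxx Fxxi Fxixi \<rho> =
     (transpose Fxxi *v fst \<rho> + Fxixi *v snd \<rho>, - (Fxx *v fst \<rho>) - Fxxi *v snd \<rho>)"

text \<open>A real quadratic form on C^n, written Phi(x) = Re(x.A x) + sum_{ij} H_ij x_i conj(x_j)
  (A symmetric, H Hermitian); it is strictly plurisubharmonic iff its Levi form H is
  positive definite.\<close>
definition spsh_quadratic :: "(complex^'n \<Rightarrow> real) \<Rightarrow> bool" where
  "spsh_quadratic \<Phi> \<longleftrightarrow>
     (\<exists>A H :: complex^'n^'n.
        transpose A = A \<and> (\<forall>i j. H$i$j = cnj (H$j$i)) \<and>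
        (\<forall>x. \<Phi> x = Re (bil x (A *v x)) + Re (\<Sum>i\<in>UNIV. \<Sum>j\<in>UNIV. H$i$j * x$i * cnj (x$j))) \<and>
        (\<forall>w. w \<noteq> 0 \<longrightarrow> Re (\<Sum>i\<in>UNIV. \<Sum>j\<in>UNIV. H$i$j * w$i * cnj (w$j)) > 0))"

definition wirtinger_dx :: "(complex^'n \<Rightarrow> real) \<Rightarrow> complex^'n \<Rightarrow> complex^'n" where
  "wirtinger_dx \<Phi> x = (\<chi> k.
     (complex_of_real (deriv (\<lambda>t. \<Phi> (x + axis k (complex_of_real t))) 0)
      - \<i> * complex_of_real (deriv (\<lambda>t. \<Phi> (x + axis k (\<i> * complex_of_real t))) 0)) / 2)"

definition Lambda :: "(complex^'n \<Rightarrow> real) \<Rightarrow> ((complex^'n) \<times> (complex^'n)) set" where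
  "Lambda \<Phi> = {(x, \<chi> k. (2 / \<i>) * (wirtinger_dx \<Phi> x $ k)) | x. True}"

end

theory Submission
  imports Defs
begin

lemma mv_comp: "(M *v x) $ i = (\<Sum>j\<in>UNIV. M$i$j * x$j)"
  by (simp add: matrix_vector_mult_def)

lemma sR_comp: "((t::real) *\<^sub>R (x::complex^'n)) $ i = of_real t * x$i"
  by (subst vector_scaleR_component) (simp add: scaleR_conv_of_real)

lemma bil_add_left: "bil (x + y) z = bil x z + bil y z"
  by (simp add: bil_def distrib_right sum.distrib)
lemma bil_add_right: "bil z (x + y) = bil z x + bil z y"
  by (simp add: bil_def distrib_left sum.distrib)
lemma bil_diff_left: "bil (x - y) z = bil x z - bil y z"
  by (simp add: bil_def left_diff_distrib sum_subtractf)
lemma bil_diff_right: "bil z (x - y) = bil z x - bil z y"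
  by (simp add: bil_def right_diff_distrib sum_subtractf)
lemma bil_scaleR_left: "bil (t *\<^sub>R x) z = of_real t * bil x z"
  unfolding bil_def sR_comp by (simp add: sum_distrib_left mult.assoc)
lemma bil_scaleR_right: "bil z (t *\<^sub>R x) = of_real t * bil z x"
  unfolding bil_def sR_comp by (simp add: sum_distrib_left mult_ac)
lemma bil_comm: "bil x y = bil y x"
  by (simp add: bil_def mult.commute)
lemma bil_transpose: "bil x (M *v y) = bil (transpose M *v x) y"
  apply (simp add: bil_def mv_comp transpose_def sum_distrib_left sum_distrib_right)
  apply (subst sum.swap) apply (simp add: mult_ac)
  done
lemma bil_axis: "bil (axis k c) y = c * y$k"
proof -
  have "bil (axis k c) y = (\<Sum>i\<in>UNIV. if i = k then c * y$i else 0)"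
    unfolding bil_def by (intro sum.cong) (auto simp: axis_def)
  then show ?thesis by simp
qed
lemma mv_scaleR: "(M::complex^'n^'m) *v (t *\<^sub>R x) = t *\<^sub>R (M *v x)"
  by (simp add: vec_eq_iff mv_comp scaleR_sum_right)
lemma mv_add: "(M::complex^'n^'m) *v (x + y) = M *v x + M *v y"
  by (simp add: vec_eq_iff mv_comp distrib_left sum.distrib)
lemma mv_diff: "(M::complex^'n^'m) *v (x - y) = M *v x - M *v y"
  by (simp add: vec_eq_iff mv_comp algebra_simps sum_subtractf)

lemma bil_minus_left: "bil (- x) z = - bil x z"
  by (simp add: bil_def sum_negf)
lemma bil_mv_left: "bil (M *v x) y = bil x (transpose M *v y)"
  by (metis bil_comm bil_transpose)
lemma bil_symm: "transpose M = M \<Longrightarrow> bil x (M *v y) = bil y (M *v x)"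
  by (metis bil_comm bil_transpose)

lemma bvm1: "bil (x v* M) y = bil x (M *v y)"
  by (metis bil_transpose transpose_matrix_vector bil_comm)
lemma bvm2: "bil y (x v* M) = bil x (M *v y)"
  by (metis bil_comm bvm1)

definition sig :: "(complex^'n) \<times> (complex^'n) \<Rightarrow> (complex^'n) \<times> (complex^'n) \<Rightarrow> complex" where
  "sig u v = bil (snd u) (fst v) - bil (fst u) (snd v)"

lemma F_sig:
  assumes "transpose Fxx = Fxx" "transpose Fxixi = Fxixi"
  shows "hol_quad Fxx Fxxi Fxixi \<rho> = - (sig (fundamental_map Fxx Fxxi Fxixi \<rho>) \<rho>) / 2"
proof -
  obtain a b where r: "\<rho> = (a, b)" by (cases \<rho>)
  have h: "bil b (transpose Fxxi *v a) = bil a (Fxxi *v b)"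
    by (metis bil_comm bil_transpose)
  show ?thesis unfolding r hol_quad_def fundamental_map_def sig_def
    by (simp add: bil_add_left bil_diff_left bil_minus_left bil_mv_left assms bvm1 bvm2)
qed

lemma F_expand:
  assumes "transpose Fxx = Fxx" "transpose Fxixi = Fxixi"
  shows "hol_quad Fxx Fxxi Fxixi (\<rho> + s *\<^sub>R t) = hol_quad Fxx Fxxi Fxixi \<rho>
     - of_real s * sig (fundamental_map Fxx Fxxi Fxixi \<rho>) t + (of_real s)^2 * hol_quad Fxx Fxxi Fxixi t"
proof -
  obtain a b where r: "\<rho> = (a, b)" by (cases \<rho>)
  obtain c d where t: "t = (c, d)" by (cases t)
  have h: "bil c (Fxx *v a) = bil a (Fxx *v c)"
    "bil d (Fxixi *v b) = bil b (Fxixi *v d)"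
    by (metis bil_symm assms(1), metis bil_symm assms(2))
  show ?thesis unfolding r t hol_quad_def fundamental_map_def sig_def
    by (simp add: bil_add_left bil_diff_left bil_minus_left bil_add_right bil_scaleR_left bil_scaleR_right
        mv_add mv_scaleR assms bil_mv_left bvm1 bvm2 h algebra_simps power2_eq_square add_divide_distrib)
qed

definition hh :: "complex^'n^'n \<Rightarrow> complex^'n \<Rightarrow> complex^'n \<Rightarrow> complex" where
  "hh H x y = (\<Sum>i\<in>UNIV. \<Sum>j\<in>UNIV. H$i$j * x$i * cnj (y$j))"

definition gg :: "complex^'n^'n \<Rightarrow> complex^'n \<Rightarrow> 'n \<Rightarrow> complex" where
  "gg H x k = (\<Sum>j\<in>UNIV. H$k$j * cnj (x$j))"

lemma hh_add_left: "hh H (x + y) z = hh H x z + hh H y z"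
  by (simp add: hh_def algebra_simps sum.distrib)
lemma hh_add_right: "hh H z (x + y) = hh H z x + hh H z y"
  by (simp add: hh_def algebra_simps sum.distrib)
lemma hh_scaleR_left: "hh H (t *\<^sub>R x) z = of_real t * hh H x z"
  unfolding hh_def sR_comp by (simp add: sum_distrib_left mult_ac)
lemma hh_scaleR_right: "hh H z (t *\<^sub>R x) = of_real t * hh H z x"
  unfolding hh_def sR_comp by (simp add: sum_distrib_left mult_ac)
lemma hh_axis_left: "hh H (axis k c) x = c * gg H x k"
proof -
  have "hh H (axis k c) x = (\<Sum>i\<in>UNIV. if i = k then c * gg H x k else 0)"
    unfolding hh_def gg_def by (intro sum.cong) (auto simp: axis_def sum_distrib_left mult_ac)
  then show ?thesis by simp
qed
lemma hh_axis_right: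
  assumes "\<forall>i j. H$i$j = cnj (H$j$i)"
  shows "hh H x (axis k c) = cnj c * cnj (gg H x k)"
proof -
  have "hh H x (axis k c) = (\<Sum>i\<in>UNIV. H$i$k * x$i * cnj c)"
    unfolding hh_def
  proof (intro sum.cong refl)
    fix i
    have "(\<Sum>j\<in>UNIV. H$i$j * x$i * cnj (axis k c $ j)) = (\<Sum>j\<in>UNIV. if j = k then H$i$k * x$i * cnj c else 0)"
      by (intro sum.cong) (auto simp: axis_def)
    then show "(\<Sum>j\<in>UNIV. H$i$j * x$i * cnj (axis k c $ j)) = H$i$k * x$i * cnj c" by simp
  qed
  also have "\<dots> = cnj c * cnj (gg H x k)"
  proof -
    have hc: "\<And>j. cnj (H$k$j) = H$j$k" using assms by (metis complex_cnj_cnj)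
    show ?thesis unfolding gg_def by (simp add: sum_distrib_left hc mult_ac)
  qed
  finally show ?thesis .
qed
lemma hh_swap:
  assumes "\<forall>i j. H$i$j = cnj (H$j$i)"
  shows "hh H x y = cnj (hh H y x)"
  unfolding hh_def
  apply (simp add: mult_ac)
  apply (subst sum.swap)
  apply (subst (2) assms)
  apply (simp add: mult_ac)
  done

lemma Phi_expand:
  assumes Phi: "\<forall>x. \<Phi>0 x = Re (bil x (A *v x)) + Re (hh H x x)" and At: "transpose A = A"
    and herm: "\<forall>i j. H$i$j = cnj (H$j$i)"
  shows "\<Phi>0 (x + t *\<^sub>R w) = \<Phi>0 x + t * (Re (2 * bil w (A *v x)) + Re (hh H x w + hh H w x)) + t^2 * \<Phi>0 w"
proof -
  have s: "bil x (A *v w) = bil w (A *v x)" by (rule bil_symm[OF At])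
  have c1: "bil (x + t *\<^sub>R w) (A *v (x + t *\<^sub>R w)) = bil x (A *v x) + of_real t * (2 * bil w (A *v x)) + (of_real t)^2 * bil w (A *v w)"
    by (simp add: mv_add mv_scaleR bil_add_left bil_add_right bil_scaleR_left bil_scaleR_right s algebra_simps power2_eq_square)
  have c2: "hh H (x + t *\<^sub>R w) (x + t *\<^sub>R w) = hh H x x + of_real t * (hh H x w + hh H w x) + (of_real t)^2 * hh H w w"
    by (simp add: hh_add_left hh_add_right hh_scaleR_left hh_scaleR_right algebra_simps power2_eq_square)
  have r: "\<And>z. Re (of_real t * z) = t * Re z" "\<And>z. Re ((of_real t)^2 * z) = t^2 * Re z"
    by (simp_all add: power2_eq_square)
  show ?thesis
    apply (subst (1 2 3) Phi[rule_format])
    apply (simp only: c1 c2 plus_complex.sel r)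
    apply (simp add: algebra_simps)
    done
qed

lemma deriv_quad: "deriv (\<lambda>t::real. a + t * b + t^2 * c) 0 = b"
proof -
  have "((\<lambda>t::real. a + t * b + t^2 * c) has_real_derivative (0 + 1 * b + (2 * 0 * c))) (at 0)"
    by (rule derivative_eq_intros | simp)+
  then show ?thesis by (intro DERIV_imp_deriv) simp
qed

lemma wirt:
  assumes Phi: "\<forall>x. \<Phi>0 x = Re (bil x (A *v x)) + Re (hh H x x)" and At: "transpose A = A"
    and herm: "\<forall>i j. H$i$j = cnj (H$j$i)"
  shows "wirtinger_dx \<Phi>0 x = (\<chi> k. (A *v x)$k + gg H x k)"
proof -
  define D where "D w = Re (2 * bil w (A *v x)) + Re (hh H x w + hh H w x)" for w
  have dD: "deriv (\<lambda>t. \<Phi>0 (x + t *\<^sub>R w)) 0 = D w" for w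
    unfolding Phi_expand[OF Phi At herm] D_def by (rule deriv_quad)
  have e1: "(\<lambda>t. \<Phi>0 (x + axis k (complex_of_real t))) = (\<lambda>t. \<Phi>0 (x + t *\<^sub>R axis k 1))" for k
  proof -
    have "axis k (complex_of_real t) = t *\<^sub>R axis k 1" for t
      unfolding vec_eq_iff sR_comp axis_def by simp
    then show ?thesis by simp
  qed
  have e2: "(\<lambda>t. \<Phi>0 (x + axis k (\<i> * complex_of_real t))) = (\<lambda>t. \<Phi>0 (x + t *\<^sub>R axis k \<i>))" for k
  proof -
    have "axis k (\<i> * complex_of_real t) = t *\<^sub>R axis k \<i>" for t
      unfolding vec_eq_iff sR_comp axis_def by (simp add: mult.commute)
    then show ?thesis by simp
  qed
  show ?thesis
    unfolding wirtinger_dx_def vec_eq_iff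
  proof
    fix k
    have D1: "D (axis k 1) = 2 * Re ((A *v x)$k) + 2 * Re (gg H x k)"
      unfolding D_def by (simp add: bil_axis hh_axis_left hh_axis_right[OF herm])
    have D2: "D (axis k \<i>) = - 2 * Im ((A *v x)$k) - 2 * Im (gg H x k)"
      unfolding D_def by (simp add: bil_axis hh_axis_left hh_axis_right[OF herm])
    show "(\<chi> k. (complex_of_real (deriv (\<lambda>t. \<Phi>0 (x + axis k (complex_of_real t))) 0) -
              \<i> * complex_of_real (deriv (\<lambda>t. \<Phi>0 (x + axis k (\<i> * complex_of_real t))) 0)) / 2) $ k =
          (\<chi> k. (A *v x) $ k + gg H x k) $ k"
      by (simp add: e1 e2 dD D1 D2 complex_eq_iff)
  qed
qed

lemma quad_zero:
  fixes c d :: real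
  assumes "\<forall>s. 0 \<le> - (s * c) + s^2 * d"
  shows "c = 0"
proof (rule ccontr)
  assume c: "c \<noteq> 0"
  define e where "e = \<bar>d\<bar> + 1"
  have e: "e > 0" unfolding e_def by simp
  define s where "s = c / e"
  have "s^2 * d \<le> s^2 * (e - 1)"
    unfolding e_def by (intro mult_left_mono) auto
  moreover have "- (s * c) + s^2 * (e - 1) = - (c^2 / e^2)"
    unfolding s_def using e by (simp add: field_simps power2_eq_square)
  moreover have "c^2 / e^2 > 0" using c e by simp
  ultimately have "- (s * c) + s^2 * d < 0" by linarith
  with assms show False by (meson not_le)
qed

definition lam :: "complex^'n^'n \<Rightarrow> complex^'n^'n \<Rightarrow> complex^'n \<Rightarrow> complex^'n" where
  "lam A H x = (\<chi> k. (2 / \<i>) * ((A *v x)$k + gg H x k))"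

lemma gg_add: "gg H (x + y) k = gg H x k + gg H y k"
  by (simp add: gg_def algebra_simps sum.distrib)
lemma gg_diff: "gg H (x - y) k = gg H x k - gg H y k"
  by (simp add: gg_def algebra_simps sum_subtractf)
lemma gg_scaleR: "gg H (t *\<^sub>R x) k = of_real t * gg H x k"
  unfolding gg_def sR_comp by (simp add: sum_distrib_left mult_ac)

lemma lam_add: "lam A H (x + y) = lam A H x + lam A H y"
  by (simp add: vec_eq_iff lam_def mv_add gg_add algebra_simps)
lemma lam_diff: "lam A H (x - y) = lam A H x - lam A H y"
  by (simp add: vec_eq_iff lam_def mv_diff gg_diff algebra_simps)
lemma lam_scaleR: "lam A H (t *\<^sub>R x) = t *\<^sub>R lam A H x"
  unfolding vec_eq_iff sR_comp lam_def mv_comp gg_scaleR by (simp add: sum_distrib_left algebra_simps)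

lemma bil_lam: "bil (lam A H x) y = (2 / \<i>) * (bil y (A *v x) + hh H y x)"
proof -
  have "bil (lam A H x) y = (2 / \<i>) * (\<Sum>k\<in>UNIV. (A *v x)$k * y$k + gg H x k * y$k)"
    unfolding bil_def lam_def by (simp add: sum_distrib_left algebra_simps)
  also have "\<dots> = (2 / \<i>) * (bil y (A *v x) + hh H y x)"
    unfolding bil_def hh_def gg_def
    by (simp add: sum.distrib sum_distrib_right sum_distrib_left mult_ac)
  finally show ?thesis .
qed

lemma Lambda_char:
  assumes Phi: "\<forall>x. \<Phi>0 x = Re (bil x (A *v x)) + Re (hh H x x)" and At: "transpose A = A"
    and herm: "\<forall>i j. H$i$j = cnj (H$j$i)"
  shows "\<zeta> \<in> Lambda \<Phi>0 \<longleftrightarrow> snd \<zeta> = lam A H (fst \<zeta>)"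
proof -
  have "(\<chi> k. (2 / \<i>) * (wirtinger_dx \<Phi>0 x $ k)) = lam A H x" for x
    unfolding wirt[OF Phi At herm] lam_def by simp
  then show ?thesis unfolding Lambda_def by (cases \<zeta>) auto
qed

lemma iso:
  assumes At: "transpose A = A" and herm: "\<forall>i j. H$i$j = cnj (H$j$i)"
  shows "Im (sig (x, lam A H x) (y, lam A H y)) = 0"
proof -
  have "sig (x, lam A H x) (y, lam A H y) = (2 / \<i>) * (hh H y x - cnj (hh H y x))"
    unfolding sig_def
    by (simp add: bil_comm[of x "lam A H y"] bil_lam bil_symm[OF At, of y x] hh_swap[OF herm, of x y] algebra_simps)
  then show ?thesis by simp
qed

lemma maxl:
  assumes At: "transpose A = A" and herm: "\<forall>i j. H$i$j = cnj (H$j$i)"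
    and h: "\<forall>x. Im (sig (y, \<eta>) (x, lam A H x)) = 0"
  shows "\<eta> = lam A H y"
proof -
  define v where "v = \<eta> - lam A H y"
  have "Im (bil v x) = 0" for x
  proof -
    have "Im (sig (y, \<eta>) (x, lam A H x)) = 0" using h by blast
    moreover have "Im (sig (y, lam A H y) (x, lam A H x)) = 0" by (rule iso[OF At herm])
    ultimately show ?thesis unfolding v_def sig_def by (simp add: bil_diff_left)
  qed
  then have "Im (bil (axis k 1) v) = 0" "Im (bil (axis k \<i>) v) = 0" for k
    by (simp_all add: bil_comm[of _ v])
  then have "v $ k = 0" for k by (simp add: bil_axis complex_eq_iff)
  then show ?thesis unfolding v_def by (simp add: vec_eq_iff)
qed

theorem proposition2p3:
  fixes \<Phi>0 \<Phi> :: "complex^'n \<Rightarrow> real" and Fxx Fxxi Fxixi :: "complex^'n^'n"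
  defines "F \<equiv> hol_quad Fxx Fxxi Fxixi"
    and "\<F> \<equiv> fundamental_map Fxx Fxxi Fxixi"
  assumes "spsh_quadratic \<Phi>0"
    and "transpose Fxx = Fxx" and "transpose Fxixi = Fxixi"
    and "\<forall>\<rho>. \<F> \<rho> = 2 *\<^sub>R \<rho> \<longrightarrow> \<rho> = 0"
    and "\<forall>\<rho>. \<F> \<rho> = (-2) *\<^sub>R \<rho> \<longrightarrow> \<rho> = 0"
    and "\<forall>\<rho>\<in>Lambda \<Phi>0. Im (F \<rho>) \<ge> 0"
    and "spsh_quadratic \<Phi>"
    and "{\<rho> - (1/2) *\<^sub>R \<F> \<rho> | \<rho>. \<rho> + (1/2) *\<^sub>R \<F> \<rho> \<in> Lambda \<Phi>0} = Lambda \<Phi>"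
  shows "Lambda \<Phi> \<inter> Lambda \<Phi>0 = {\<rho> - (1/2) *\<^sub>R \<F> \<rho> | \<rho>. \<rho> \<in> Lambda \<Phi>0 \<and> Im (F \<rho>) = 0}"
proof -
  note spsh = assms(3) and FxxS = assms(4) and FxixiS = assms(5) and pos = assms(8) and img = assms(10)
  obtain A H :: "complex^'n^'n" where At: "transpose A = A" and herm: "\<forall>i j. H$i$j = cnj (H$j$i)"
    and P: "\<forall>x. \<Phi>0 x = Re (bil x (A *v x)) + Re (\<Sum>i\<in>UNIV. \<Sum>j\<in>UNIV. H$i$j * x$i * cnj (x$j))"
    using spsh unfolding spsh_quadratic_def by blast
  have Phi: "\<forall>x. \<Phi>0 x = Re (bil x (A *v x)) + Re (hh H x x)"
    using P unfolding hh_def by blast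
  define L where "L = Lambda \<Phi>0"
  have memL: "\<zeta> \<in> L \<longleftrightarrow> snd \<zeta> = lam A H (fst \<zeta>)" for \<zeta>
    unfolding L_def by (rule Lambda_char[OF Phi At herm])
  have Ladd: "u + v \<in> L" if "u \<in> L" "v \<in> L" for u v
    using that by (simp add: memL lam_add)
  have Ldiff: "u - v \<in> L" if "u \<in> L" "v \<in> L" for u v
    using that by (simp add: memL lam_diff)
  have Lscale: "t *\<^sub>R u \<in> L" if "u \<in> L" for u t
    using that by (simp add: memL lam_scaleR)
  have Liso: "Im (sig u v) = 0" if "u \<in> L" "v \<in> L" for u v
  proof -
    define x where "x = fst u"
    define y where "y = fst v"
    have u: "u = (x, lam A H x)" using that(1) by (simp add: x_def memL prod_eq_iff)
    have v: "v = (y, lam A H y)" using that(2) by (simp add: y_def memL prod_eq_iff)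
    show ?thesis unfolding u v by (rule iso[OF At herm])
  qed
  have Lmax: "u \<in> L" if "\<forall>v\<in>L. Im (sig u v) = 0" for u
  proof -
    obtain y \<eta> where u: "u = (y, \<eta>)" by (cases u)
    have "\<forall>x. Im (sig (y, \<eta>) (x, lam A H x)) = 0"
      using that u by (simp add: memL)
    then have "\<eta> = lam A H y" by (rule maxl[OF At herm])
    then show ?thesis using u by (simp add: memL)
  qed
  have Fsig: "F \<rho> = - (sig (\<F> \<rho>) \<rho>) / 2" for \<rho>
    unfolding F_def \<F>_def by (rule F_sig[OF FxxS FxixiS])
  have Fexp: "F (\<rho> + s *\<^sub>R t) = F \<rho> - of_real s * sig (\<F> \<rho>) t + (of_real s)^2 * F t" for \<rho> s t
    unfolding F_def \<F>_def by (rule F_expand[OF FxxS FxixiS])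
  show ?thesis
  proof (intro equalityI subsetI)
    fix \<zeta> assume z: "\<zeta> \<in> Lambda \<Phi> \<inter> Lambda \<Phi>0"
    then obtain \<rho> where zr: "\<zeta> = \<rho> - (1/2) *\<^sub>R \<F> \<rho>" and w: "\<rho> + (1/2) *\<^sub>R \<F> \<rho> \<in> L"
      using img unfolding L_def by blast
    have zL: "\<zeta> \<in> L" using z unfolding L_def by blast
    have hh2: "(1/2::real) *\<^sub>R q + (1/2::real) *\<^sub>R q = q" for q :: "(complex^'n) \<times> (complex^'n)"
      by (metis scaleR_add_left scaleR_one field_sum_of_halves)
    have "\<rho> = (1/2) *\<^sub>R (\<zeta> + (\<rho> + (1/2) *\<^sub>R \<F> \<rho>))"
      unfolding zr by (simp add: algebra_simps hh2)
    then have rL: "\<rho> \<in> L" using Lscale[OF Ladd[OF zL w]] by metis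
    have "\<F> \<rho> = (\<rho> + (1/2) *\<^sub>R \<F> \<rho>) - \<zeta>"
      unfolding zr by (simp add: algebra_simps hh2)
    then have fL: "\<F> \<rho> \<in> L" using Ldiff[OF w zL] by metis
    have "Im (F \<rho>) = 0" unfolding Fsig using Liso[OF fL rL] by simp
    then show "\<zeta> \<in> {\<rho> - (1/2) *\<^sub>R \<F> \<rho> | \<rho>. \<rho> \<in> Lambda \<Phi>0 \<and> Im (F \<rho>) = 0}"
      using zr rL unfolding L_def by blast
  next
    fix \<zeta> assume "\<zeta> \<in> {\<rho> - (1/2) *\<^sub>R \<F> \<rho> | \<rho>. \<rho> \<in> Lambda \<Phi>0 \<and> Im (F \<rho>) = 0}"
    then obtain \<rho> where zr: "\<zeta> = \<rho> - (1/2) *\<^sub>R \<F> \<rho>" and rL: "\<rho> \<in> L" and i0: "Im (F \<rho>) = 0"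
      unfolding L_def by blast
    have "\<forall>v\<in>L. Im (sig (\<F> \<rho>) v) = 0"
    proof
      fix v assume vL: "v \<in> L"
      have "\<forall>s. 0 \<le> - (s * Im (sig (\<F> \<rho>) v)) + s^2 * Im (F v)"
      proof
        fix s :: real
        have "\<rho> + s *\<^sub>R v \<in> L" using Ladd[OF rL Lscale[OF vL]] .
        then have "0 \<le> Im (F (\<rho> + s *\<^sub>R v))" using pos unfolding L_def by blast
        also have "Im (F (\<rho> + s *\<^sub>R v)) = - (s * Im (sig (\<F> \<rho>) v)) + s^2 * Im (F v)"
          unfolding Fexp using i0 by (simp add: power2_eq_square)
        finally show "0 \<le> - (s * Im (sig (\<F> \<rho>) v)) + s^2 * Im (F v)" .
      qed
      then show "Im (sig (\<F> \<rho>) v) = 0" by (rule quad_zero)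
    qed
    then have fL: "\<F> \<rho> \<in> L" by (rule Lmax)
    have zL: "\<zeta> \<in> L" unfolding zr using Ldiff[OF rL Lscale[OF fL]] .
    have "\<rho> + (1/2) *\<^sub>R \<F> \<rho> \<in> L" using Ladd[OF rL Lscale[OF fL]] .
    then have "\<zeta> \<in> Lambda \<Phi>" using img zr unfolding L_def by blast
    with zL show "\<zeta> \<in> Lambda \<Phi> \<inter> Lambda \<Phi>0" unfolding L_def by blast
  qed
qed

end
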